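(* Let $\mathbf a=(a_1,\dots,a_m)$ be an admissible sequence and suppose there is $k$ with $1\le k<m$ and $a_k\le 2k$. Put $\mathbf a'=(a_1,\dots,a_k)$ and $\mathbf a''=(a_{k+1}-2k,\dots,a_m-2k)$. Then $\mathbf a'$ and $\mathbf a''$ are admissible, and for every nonnegative integer $x$, $$\det\mathbf m(\mathbf a,x)=\det\mathbf m(\mathbf a',x)\cdot\det\mathbf m(\mathbf a'',x+k).$$
   Context: $q$ is an indeterminate; $(a;q)_n=\prod_{j=0}^{n-1}(1-aq^j)$ for $n\ge0$. A finite sequence of integers $\mathbf a=(a_1,\dots,a_m)$ is admissible if it is strictly increasing and $2i-1\le a_i\le 2m$ for all $1\le i\le m$. For a sequence $\mathbf a$ of length $m$ and a nonnegative integer $x$, $\mathbf m(\mathbf a,x)$ is the $m\times m$ matrix with $(i,j)$-entry $\frac{(q^{2i+2x};q^2)_{a_j+1-2i}}{(q;q)_{a_j+1-2i}}$ if $a_j+1-2i\ge 0$ and $0$ otherwise. *)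

theory Defs
  imports "Jordan_Normal_Form.Determinant" "HOL-Computational_Algebra.Formal_Power_Series"
begin

definition qpoch :: "'a::comm_ring_1 \<Rightarrow> 'a \<Rightarrow> nat \<Rightarrow> 'a" where
  "qpoch a q n = (\<Prod>j<n. (1 - a * q ^ j))"

text \<open>The indeterminate q, realised as the formal variable in rational formal power series.\<close>
abbreviation qX :: "rat fps" where "qX \<equiv> fps_X"

text \<open>Admissible sequences (1-based index i corresponds to list position i-1).\<close>
definition admissible :: "int list \<Rightarrow> bool" where
  "admissible a \<longleftrightarrow> sorted_wrt (<) a \<and>
     (\<forall>i\<in>{1..length a}. 2 * int i - 1 \<le> a ! (i - 1) \<and> a ! (i - 1) \<le> 2 * int (length a))"

text \<open>The (i,j)-entry (1-based i) for column value aj.\<close>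
definition mentry :: "nat \<Rightarrow> int \<Rightarrow> nat \<Rightarrow> rat fps" where
  "mentry i aj x = (if aj + 1 - 2 * int i \<ge> 0
      then qpoch (qX ^ (2 * i + 2 * x)) (qX ^ 2) (nat (aj + 1 - 2 * int i))
           / qpoch qX qX (nat (aj + 1 - 2 * int i))
      else 0)"

definition mmat :: "int list \<Rightarrow> nat \<Rightarrow> rat fps mat" where
  "mmat a x = mat (length a) (length a) (\<lambda>(i, j). mentry (i + 1) (a ! j) x)"

end

theory Submission
  imports Defs
begin

lemma mentry_shift: "mentry (k + i + 1) aj x = mentry (i + 1) (aj - 2 * int k) (x + k)"
proof -
  have e1: "aj + 1 - 2 * int (k + i + 1) = (aj - 2 * int k) + 1 - 2 * int (i + 1)" by simp
  have e2: "2 * (k + i + 1) + 2 * x = 2 * (i + 1) + 2 * (x + k)" by simp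
  show ?thesis unfolding mentry_def e1 e2 by simp
qed

theorem mainTheorem5:
  fixes a :: "int list" and k :: nat
  assumes "admissible a" and "1 \<le> k" and "k < length a" and "a ! (k - 1) \<le> 2 * int k"
  shows "admissible (take k a) \<and>
         admissible (map (\<lambda>t. t - 2 * int k) (drop k a)) \<and>
         (\<forall>x::nat. det (mmat a x) =
            det (mmat (take k a) x) * det (mmat (map (\<lambda>t. t - 2 * int k) (drop k a)) (x + k)))"
proof -
  let ?m = "length a"
  have sw: "sorted_wrt (<) a" and bd: "\<And>i. i \<in> {1..?m} \<Longrightarrow> 2 * int i - 1 \<le> a ! (i - 1) \<and> a ! (i - 1) \<le> 2 * int ?m"
    using assms(1) unfolding admissible_def by auto
  have mono: "\<And>i j. i < j \<Longrightarrow> j < ?m \<Longrightarrow> a ! i < a ! j"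
    using sw by (simp add: sorted_wrt_iff_nth_less)
  have small: "\<And>j. j < k \<Longrightarrow> a ! j \<le> 2 * int k"
  proof -
    fix j assume j: "j < k"
    show "a ! j \<le> 2 * int k"
    proof (cases "j = k - 1")
      case True then show ?thesis using assms(4) by simp
    next
      case False then have "j < k - 1" using j by simp
      then have "a ! j < a ! (k - 1)" using mono assms(3) by simp
      then show ?thesis using assms(4) by simp
    qed
  qed
  have A1: "admissible (take k a)"
    unfolding admissible_def
  proof (intro conjI ballI)
    show "sorted_wrt (<) (take k a)" using sw by (simp add: sorted_wrt_take)
  next
    fix i assume i: "i \<in> {1..length (take k a)}"
    then have ik: "i \<le> k" "1 \<le> i" using assms(3) by auto
    have "2 * int i - 1 \<le> a ! (i - 1)" using bd[of i] ik assms(3) by auto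
    then show "2 * int i - 1 \<le> take k a ! (i - 1)" using ik by simp
    have "a ! (i - 1) \<le> 2 * int k" using small[of "i - 1"] ik by simp
    then show "take k a ! (i - 1) \<le> 2 * int (length (take k a))" using ik assms(3) by simp
  qed
  have A2: "admissible (map (\<lambda>t. t - 2 * int k) (drop k a))"
    unfolding admissible_def
  proof (intro conjI ballI)
    have "sorted_wrt (<) (drop k a)" using sw by (simp add: sorted_wrt_drop)
    then show "sorted_wrt (<) (map (\<lambda>t. t - 2 * int k) (drop k a))"
      by (simp add: sorted_wrt_map)
  next
    fix i assume i: "i \<in> {1..length (map (\<lambda>t. t - 2 * int k) (drop k a))}"
    then have ik: "1 \<le> i" "i \<le> ?m - k" by auto
    have b: "2 * int (k + i) - 1 \<le> a ! (k + i - 1) \<and> a ! (k + i - 1) \<le> 2 * int ?m"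
      using bd[of "k + i"] ik assms(3) by auto
    have eq: "map (\<lambda>t. t - 2 * int k) (drop k a) ! (i - 1) = a ! (k + i - 1) - 2 * int k"
      using ik assms(3) by (simp add: add.commute)
    show "2 * int i - 1 \<le> map (\<lambda>t. t - 2 * int k) (drop k a) ! (i - 1)"
      using b eq by simp
    show "map (\<lambda>t. t - 2 * int k) (drop k a) ! (i - 1)
          \<le> 2 * int (length (map (\<lambda>t. t - 2 * int k) (drop k a)))"
      using b eq ik assms(3) by simp
  qed
  have D: "det (mmat a x) =
            det (mmat (take k a) x) * det (mmat (map (\<lambda>t. t - 2 * int k) (drop k a)) (x + k))" for x
  proof -
    let ?n = "?m - k"
    define B where "B = mat k ?n (\<lambda>(i, j). mentry (i + 1) (a ! (k + j)) x)"
    have eqm: "mmat a x = four_block_mat (mmat (take k a) x) B (0\<^sub>m ?n k)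
               (mmat (map (\<lambda>t. t - 2 * int k) (drop k a)) (x + k))"
    proof (rule eq_matI)
      fix i j assume i: "i < dim_row (four_block_mat (mmat (take k a) x) B (0\<^sub>m ?n k)
               (mmat (map (\<lambda>t. t - 2 * int k) (drop k a)) (x + k)))"
        and j: "j < dim_col (four_block_mat (mmat (take k a) x) B (0\<^sub>m ?n k)
               (mmat (map (\<lambda>t. t - 2 * int k) (drop k a)) (x + k)))"
      have i': "i < ?m" and j': "j < ?m" using i j assms(3) by (auto simp: mmat_def min_def)
      show "mmat a x $$ (i, j) = four_block_mat (mmat (take k a) x) B (0\<^sub>m ?n k)
               (mmat (map (\<lambda>t. t - 2 * int k) (drop k a)) (x + k)) $$ (i, j)"
      proof (cases "i < k")
        case True
        then show ?thesis using i' j' assms(3)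
          by (auto simp: mmat_def B_def min_def)
      next
        case False
        note iF = False
        show ?thesis
        proof (cases "j < k")
          case True
          have "a ! j \<le> 2 * int k" using small True by simp
          then have "mentry (i + 1) (a ! j) x = 0" using iF unfolding mentry_def by auto
          then show ?thesis using i' j' True iF assms(3) by (auto simp: mmat_def min_def)
        next
          case False
          have r: "mentry (i + 1) (a ! j) x = mentry (i - k + 1) (a ! j - 2 * int k) (x + k)"
            using mentry_shift[of k "i - k" "a ! j" x] iF by simp
          show ?thesis using i' j' False iF assms(3) r by (auto simp: mmat_def min_def)
        qed
      qed
    qed (insert assms(3), auto simp: mmat_def B_def min_def less_imp_le)
    show ?thesis unfolding eqm
      by (rule det_four_block_mat_lower_left_zero[of _ k _ ?n])
         (insert assms(3), auto simp: mmat_def B_def min_def less_imp_le)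
  qed
  show ?thesis using A1 A2 D by blast
qed

end
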